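(* Let $f_1,\dots,f_k$ be tropical polynomials in $n$ variables, each consisting of at most $m$ monomials, and let $V=V(f_1,\dots,f_k)\subset\mathbb{R}^n$ be the tropical prevariety they define. Assume $n\le k\binom{m}{2}$. Then the number of all faces of $V$ is at most $$n\,2^n\binom{k\binom{m}{2}}{n}.$$
   Context: A tropical polynomial $f$ in $n$ variables is a function $f(x)=\min\{L_1(x),\dots,L_m(x)\}$ on $\mathbb{R}^n$, where each tropical monomial $L_j$ is an affine-linear function $L_j(x)=\sum_{i=1}^n a_{ji}x_i+b_j$ (with non-negative integer coefficients $a_{ji}$ and real $b_j$; the result also holds for arbitrary real coefficients). The tropical hypersurface $V(f)$ is the set of points where this piecewise-linear function is not smooth (where the minimum is attained by at least two monomials). A tropical prevariety $V(f_1,\dots,f_k)$ is $V(f_1)\cap\cdots\cap V(f_k)$. Writing $f_i=\min\{L_{i,1},\dots,L_{i,m}\}$ and $D=\{(i,j):1\le i\le k,\ 1\le j\le m\}$, for $B\subset D$ let $U_B$ be the set of $x\in\mathbb{R}^n$ such that $\min_j L_{i,j}(x)=L_{i,j_0}(x)$ for every $(i,j_0)\in B$ and $\min_j L_{i,j}(x)<L_{i,j_1}(x)$ for every $(i,j_1)\notin B$. The faces of $V$ are the closures of the nonempty sets $U_B$ contained in $V$ (i.e. such that for every $i$ there are $j_0<j_1$ with $(i,j_0),(i,j_1)\in B$). *)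

theory Defs
  imports "HOL-Analysis.Analysis"
begin

text \<open>A system of k tropical polynomials in the variables x \<in> real^'n (n = CARD('n)).
  Polynomial i (i < k) has mc i monomials, indexed by j < mc i; monomial (i,j) is
  L i j x = (sum over coordinates l of a i j l * x l) + b i j,
  with non-negative integer exponents a i j l and real constant b i j.\<close>

definition trop_mono :: "(nat \<Rightarrow> nat \<Rightarrow> 'n::finite \<Rightarrow> nat) \<Rightarrow> (nat \<Rightarrow> nat \<Rightarrow> real)
    \<Rightarrow> nat \<Rightarrow> nat \<Rightarrow> real^'n \<Rightarrow> real" where
  "trop_mono a b i j x = (\<Sum>l\<in>UNIV. real (a i j l) * x $ l) + b i j"

definition trop_poly :: "(nat \<Rightarrow> nat \<Rightarrow> 'n::finite \<Rightarrow> nat) \<Rightarrow> (nat \<Rightarrow> nat \<Rightarrow> real)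
    \<Rightarrow> (nat \<Rightarrow> nat) \<Rightarrow> nat \<Rightarrow> real^'n \<Rightarrow> real" where
  "trop_poly a b mc i x = Min ((\<lambda>j. trop_mono a b i j x) ` {..<mc i})"

definition trop_hypersurface :: "(nat \<Rightarrow> nat \<Rightarrow> 'n::finite \<Rightarrow> nat) \<Rightarrow> (nat \<Rightarrow> nat \<Rightarrow> real)
    \<Rightarrow> (nat \<Rightarrow> nat) \<Rightarrow> nat \<Rightarrow> (real^'n) set" where
  "trop_hypersurface a b mc i = {x. \<exists>j0<mc i. \<exists>j1<mc i. j0 \<noteq> j1 \<and>
      trop_mono a b i j0 x = trop_poly a b mc i x \<and> trop_mono a b i j1 x = trop_poly a b mc i x}"

definition trop_prevariety :: "(nat \<Rightarrow> nat \<Rightarrow> 'n::finite \<Rightarrow> nat) \<Rightarrow> (nat \<Rightarrow> nat \<Rightarrow> real)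
    \<Rightarrow> (nat \<Rightarrow> nat) \<Rightarrow> nat \<Rightarrow> (real^'n) set" where
  "trop_prevariety a b mc k = (\<Inter>i\<in>{..<k}. trop_hypersurface a b mc i)"

definition trop_index :: "(nat \<Rightarrow> nat) \<Rightarrow> nat \<Rightarrow> (nat \<times> nat) set" where
  "trop_index mc k = {(i, j). i < k \<and> j < mc i}"

definition trop_cell :: "(nat \<Rightarrow> nat \<Rightarrow> 'n::finite \<Rightarrow> nat) \<Rightarrow> (nat \<Rightarrow> nat \<Rightarrow> real)
    \<Rightarrow> (nat \<Rightarrow> nat) \<Rightarrow> nat \<Rightarrow> (nat \<times> nat) set \<Rightarrow> (real^'n) set" where
  "trop_cell a b mc k B = {x.
      (\<forall>(i, j)\<in>B. trop_mono a b i j x = trop_poly a b mc i x) \<and>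
      (\<forall>(i, j)\<in>trop_index mc k - B. trop_poly a b mc i x < trop_mono a b i j x)}"

definition trop_faces :: "(nat \<Rightarrow> nat \<Rightarrow> 'n::finite \<Rightarrow> nat) \<Rightarrow> (nat \<Rightarrow> nat \<Rightarrow> real)
    \<Rightarrow> (nat \<Rightarrow> nat) \<Rightarrow> nat \<Rightarrow> (real^'n) set set" where
  "trop_faces a b mc k = {closure (trop_cell a b mc k B) | B.
      B \<subseteq> trop_index mc k \<and> trop_cell a b mc k B \<noteq> {} \<and>
      trop_cell a b mc k B \<subseteq> trop_prevariety a b mc k}"

end

theory Submission
  imports Defs
begin



definition sgnvec :: "('i \<Rightarrow> 'a \<Rightarrow> real) \<Rightarrow> 'i set \<Rightarrow> 'a \<Rightarrow> ('i \<Rightarrow> real)" where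
  "sgnvec h Q x = restrict (\<lambda>q. sgn (h q x)) Q"

definition FB :: "nat \<Rightarrow> nat \<Rightarrow> nat" where
  "FB q d = (\<Sum>i\<le>d. (q choose i) * 2^i)"

lemma FB_0: "FB 0 d = 1"
  unfolding FB_def by (induction d) auto

lemma FB_Suc: "FB (Suc q) (Suc d) = FB q (Suc d) + 2 * FB q d"
proof -
  have "FB (Suc q) (Suc d) = 1 + (\<Sum>i\<le>d. (Suc q choose Suc i) * 2^Suc i)"
    unfolding FB_def by (subst sum.atMost_Suc_shift) simp
  also have "\<dots> = 1 + (\<Sum>i\<le>d. (q choose Suc i) * 2^Suc i) + (\<Sum>i\<le>d. (q choose i) * 2^Suc i)"
    by (simp add: sum.distrib algebra_simps)
  also have "1 + (\<Sum>i\<le>d. (q choose Suc i) * 2^Suc i) = FB q (Suc d)"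
    unfolding FB_def by (subst sum.atMost_Suc_shift) simp
  also have "(\<Sum>i\<le>d. (q choose i) * 2^Suc i) = 2 * FB q d"
    unfolding FB_def by (simp add: sum_distrib_left algebra_simps)
  finally show ?thesis .
qed

lemma FB_mono: "q \<le> q' \<Longrightarrow> FB q d \<le> FB q' d"
  unfolding FB_def by (intro sum_mono mult_right_mono binomial_right_mono) auto

lemma FB_mono_d: "d \<le> d' \<Longrightarrow> FB q d \<le> FB q d'"
  unfolding FB_def by (intro sum_mono2) auto

lemma sgn_cases: "sgn (x::real) \<in> {-1,0,1}"
  by (simp add: sgn_real_def)

lemma sgnvec_finite:
  assumes "finite Q" shows "finite (sgnvec h Q ` S)"
proof -
  have "sgnvec h Q ` S \<subseteq> PiE Q (\<lambda>_. {-1,0,1})"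
    by (auto simp: sgnvec_def sgn_real_def split: if_splits)
  moreover have "finite (PiE Q (\<lambda>_. {-1::real,0,1}))"
    using assms by (intro finite_PiE) auto
  ultimately show ?thesis by (rule finite_subset)
qed

lemma aff_comb:
  assumes "\<forall>x. f x = inner c x + e"
  shows "f ((1-t) *\<^sub>R y + t *\<^sub>R x) = (1-t) * f y + t * f x"
  using assms by (simp add: inner_add_right algebra_simps)

lemma conv_zero:
  fixes h :: "'i \<Rightarrow> 'a::euclidean_space \<Rightarrow> real"
  assumes aff: "\<And>q. \<exists>c e. \<forall>x. h q x = inner c x + e"
    and S: "affine S" "x \<in> S" "y \<in> S"
    and eq: "sgnvec h Q x = sgnvec h Q y"
    and hx: "h q x > 0" and hy: "h q y < 0"
  shows "\<exists>z\<in>S. h q z = 0 \<and> sgnvec h Q z = sgnvec h Q x"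
proof -
  define t where "t = h q y / (h q y - h q x)"
  have t0: "0 < t" and t1: "t < 1" using hx hy by (auto simp: t_def field_simps)
  define z where "z = (1-t) *\<^sub>R y + t *\<^sub>R x"
  have lin: "h r z = (1-t) * h r y + t * h r x" for r
  proof -
    obtain c e where "\<forall>x. h r x = inner c x + e" using aff by blast
    then show ?thesis unfolding z_def by (rule aff_comb)
  qed
  have zS: "z \<in> S" using S unfolding z_def affine_def by auto
  have "h q z = 0" using hx hy unfolding lin t_def by (simp add: field_simps)
  moreover have "sgnvec h Q z = sgnvec h Q x"
  proof
    fix r show "sgnvec h Q z r = sgnvec h Q x r"
    proof (cases "r \<in> Q")
      case True
      then have "sgn (h r x) = sgn (h r y)" using eq unfolding sgnvec_def restrict_def
        by (metis (mono_tags, lifting))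
      then have "sgn ((1-t) * h r y + t * h r x) = sgn (h r x)"
      proof -
        have a: "0 < 1 - t" using t1 by simp
        have p1: "0 < (1-t) * h r y + t * h r x" if "0 < h r x" "0 < h r y"
          using a t0 that by (intro add_pos_pos mult_pos_pos) auto
        have p2: "(1-t) * h r y + t * h r x < 0" if "h r x < 0" "h r y < 0"
          using a t0 that by (intro add_neg_neg mult_pos_neg) auto
        show ?thesis using p1 p2 \<open>sgn (h r x) = sgn (h r y)\<close>
          by (cases "h r x > 0"; cases "h r x < 0"; cases "h r y > 0"; cases "h r y < 0")
             (auto simp: sgn_real_def)
      qed
      then show ?thesis using True unfolding sgnvec_def lin by simp
    qed (simp add: sgnvec_def)
  qed
  ultimately show ?thesis using zS by blast
qed

lemma sign_count:
  fixes h :: "'i \<Rightarrow> 'a::euclidean_space \<Rightarrow> real"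
  assumes aff: "\<And>q. \<exists>c e. \<forall>x. h q x = inner c x + e"
    and fin: "finite Q"
  shows "affine S \<Longrightarrow> aff_dim S \<le> int d \<Longrightarrow> card (sgnvec h Q ` S) \<le> FB (card Q) d"
  using fin
proof (induction Q arbitrary: S d rule: finite_induct)
  case empty
  have "sgnvec h {} ` S \<subseteq> {\<lambda>_. undefined}" by (auto simp: sgnvec_def)
  then have "card (sgnvec h {} ` S) \<le> card {\<lambda>_::'i. undefined::real}"
    by (intro card_mono) auto
  then show ?case by (simp add: FB_0)
next
  case (insert q Q)
  let ?s = "sgnvec h (insert q Q)"
  let ?sQ = "sgnvec h Q"
  define W where "W = ?s ` S"
  define V where "V = ?sQ ` S"
  define H where "H = {x. h q x = 0}"
  define T where "T = ?sQ ` (S \<inter> H)"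
  define \<pi> where "\<pi> = (\<lambda>w::'i\<Rightarrow>real. w(q := undefined))"
  have s0: "?sQ x = \<pi> (?s x)" for x
    using insert.hyps(2) by (intro ext) (auto simp: sgnvec_def \<pi>_def restrict_def)
  have sq: "sgnvec h (insert q Q) x q = sgn (h q x)" for x unfolding sgnvec_def by simp
  have recon: "w = (\<pi> w)(q := w q)" for w by (simp add: \<pi>_def)
  have finV: "finite V" unfolding V_def by (rule sgnvec_finite[OF insert.hyps(1)])
  have finT: "finite T" unfolding T_def by (rule sgnvec_finite[OF insert.hyps(1)])
  have TV: "T \<subseteq> V" unfolding T_def V_def by auto
  have piW: "\<pi> ` W = V" unfolding W_def V_def using s0 by (auto simp: image_image)
  have IHV: "card V \<le> FB (card Q) d" unfolding V_def using insert.IH insert.prems by blast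
  have cardins: "card (insert q Q) = Suc (card Q)" using insert.hyps by simp
  show ?case
  proof (cases "\<forall>x\<in>S. \<forall>y\<in>S. sgn (h q x) = sgn (h q y)")
    case True
    have "inj_on \<pi> W"
    proof (rule inj_onI)
      fix w1 w2 assume "w1 \<in> W" "w2 \<in> W" "\<pi> w1 = \<pi> w2"
      then obtain x1 x2 where X: "x1 \<in> S" "x2 \<in> S" "w1 = ?s x1" "w2 = ?s x2" unfolding W_def by blast
      have "w1 q = w2 q" unfolding X(3,4) sq using True X(1,2) by blast
      then show "w1 = w2" using recon[of w1] recon[of w2] \<open>\<pi> w1 = \<pi> w2\<close> by simp
    qed
    then have "card W = card (\<pi> ` W)" by (simp add: card_image)
    then have "card W = card V" using piW by simp
    also have "\<dots> \<le> FB (card Q) d" by (rule IHV)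
    also have "\<dots> \<le> FB (card (insert q Q)) d" using cardins by (intro FB_mono) simp
    finally show ?thesis by (simp add: W_def)
  next
    case False
    then obtain x y where xy: "x \<in> S" "y \<in> S" "sgn (h q x) \<noteq> sgn (h q y)" by blast
    then have "x \<noteq> y" by auto
    obtain c e where ce: "\<forall>x. h q x = inner c x + e" using aff by blast
    have Haff: "affine H"
    proof -
      have "H = {x. c \<bullet> x = - e}" unfolding H_def using ce by (auto simp: algebra_simps)
      then show ?thesis using affine_hyperplane by simp
    qed
    have SH: "affine (S \<inter> H)" using insert.prems(1) Haff by (rule affine_Int)
    have "S \<inter> H \<subset> S"
    proof -
      have "h q x \<noteq> 0 \<or> h q y \<noteq> 0" using xy(3) by auto
      then show ?thesis using xy unfolding H_def by auto
    qed
    then have "aff_dim (S \<inter> H) < aff_dim S"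
    proof -
      have "affine hull (S \<inter> H) = S \<inter> H" using SH by (rule hull_same)
      moreover have "affine hull S = S" using insert.prems(1) by (rule hull_same)
      ultimately show ?thesis using \<open>S \<inter> H \<subset> S\<close> by (metis aff_dim_psubset)
    qed
    moreover have "1 \<le> aff_dim S"
    proof -
      have "aff_dim {x,y} \<le> aff_dim S" using xy by (intro aff_dim_subset) auto
      then show ?thesis using \<open>x \<noteq> y\<close> by (simp add: aff_dim_2)
    qed
    ultimately obtain d' where d': "d = Suc d'" "aff_dim (S \<inter> H) \<le> int d'"
    proof -
      have "1 \<le> int d" using \<open>1 \<le> aff_dim S\<close> insert.prems(2) by linarith
      then have "d = Suc (d - 1)" by simp
      moreover have "aff_dim (S \<inter> H) \<le> int (d - 1)"
        using \<open>aff_dim (S \<inter> H) < aff_dim S\<close> insert.prems(2) \<open>1 \<le> int d\<close> by simp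
      ultimately show ?thesis using that by blast
    qed
    have IHT: "card T \<le> FB (card Q) d'" unfolding T_def using insert.IH SH d'(2) by blast
    define W1 where "W1 = {w\<in>W. \<pi> w \<notin> T}"
    define W2 where "W2 = {w\<in>W. \<pi> w \<in> T}"
    have "inj_on \<pi> W1"
    proof (rule inj_onI)
      fix w1 w2 assume A: "w1 \<in> W1" "w2 \<in> W1" "\<pi> w1 = \<pi> w2"
      then obtain x1 x2 where X: "x1 \<in> S" "x2 \<in> S" "w1 = ?s x1" "w2 = ?s x2" unfolding W1_def W_def by blast
      have nT: "?sQ x1 \<notin> T" "?sQ x2 \<notin> T" using A(1,2) unfolding X(3,4) W1_def s0 by blast+
      have eq0: "?sQ x1 = ?sQ x2" using A(3) unfolding X(3,4) s0 .
      have n1: "h q x1 \<noteq> 0" using nT X(1) unfolding T_def H_def by blast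
      have n2: "h q x2 \<noteq> 0" using nT X(2) unfolding T_def H_def by blast
      have "sgn (h q x1) = sgn (h q x2)"
      proof (rule ccontr)
        assume ne: "sgn (h q x1) \<noteq> sgn (h q x2)"
        have "\<exists>z\<in>S. h q z = 0 \<and> (?sQ z = ?sQ x1 \<or> ?sQ z = ?sQ x2)"
        proof (cases "h q x1 > 0")
          case True
          then have "h q x2 < 0" using ne n2 by (auto simp: sgn_real_def split: if_splits)
          then show ?thesis using conv_zero[OF aff insert.prems(1) X(1) X(2) eq0 True] by blast
        next
          case False
          then have "h q x1 < 0" "h q x2 > 0" using ne n1 n2 by (auto simp: sgn_real_def split: if_splits)
          then show ?thesis using conv_zero[OF aff insert.prems(1) X(2) X(1) eq0[symmetric]] by blast
        qed
        then obtain z where "z \<in> S" "h q z = 0" "?sQ z = ?sQ x1 \<or> ?sQ z = ?sQ x2" by blast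
        then have "?sQ x1 \<in> T \<or> ?sQ x2 \<in> T" unfolding T_def H_def by (metis (mono_tags, lifting) IntI image_eqI mem_Collect_eq)
        then show False using nT by blast
      qed
      then have "w1 q = w2 q" unfolding X(3,4) sq .
      then show "w1 = w2" using recon[of w1] recon[of w2] A(3) by simp
    qed
    moreover have "\<pi> ` W1 \<subseteq> V - T" using piW unfolding W1_def by blast
    ultimately have c1: "card W1 \<le> card V - card T"
    proof -
      assume inj: "inj_on \<pi> W1" and sub: "\<pi> ` W1 \<subseteq> V - T"
      have "card W1 = card (\<pi> ` W1)" using inj by (simp add: card_image)
      also have "\<dots> \<le> card (V - T)" using sub finV by (intro card_mono) auto
      also have "\<dots> = card V - card T" using finT TV by (rule card_Diff_subset)
      finally show ?thesis .
    qed
    have "W2 \<subseteq> (\<lambda>(\<tau>, s). \<tau>(q := s)) ` (T \<times> {-1,0,1})"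
    proof
      fix w assume "w \<in> W2"
      then obtain x where "x \<in> S" "w = ?s x" "\<pi> w \<in> T" unfolding W2_def W_def by blast
      moreover have "w q \<in> {-1,0,1}" unfolding \<open>w = ?s x\<close> sq by (rule sgn_cases)
      ultimately show "w \<in> (\<lambda>(\<tau>, s). \<tau>(q := s)) ` (T \<times> {-1,0,1})"
        using recon[of w] by (auto intro!: image_eqI[where x="(\<pi> w, w q)"])
    qed
    then have "card W2 \<le> card ((\<lambda>(\<tau>, s). \<tau>(q := s)) ` (T \<times> {-1::real,0,1}))"
      using finT by (intro card_mono) auto
    also have "\<dots> \<le> card (T \<times> {-1::real,0,1})"
      using finT by (intro card_image_le) auto
    also have "\<dots> = 3 * card T" by (simp add: card_cartesian_product)
    finally have c2: "card W2 \<le> 3 * card T" .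
    have "W = W1 \<union> W2" unfolding W1_def W2_def by blast
    then have "card W \<le> card W1 + card W2" by (simp add: card_Un_le)
    also have "\<dots> \<le> card V + 2 * card T" using c1 c2 card_mono[OF finV TV] by linarith
    also have "\<dots> \<le> FB (card Q) (Suc d') + 2 * FB (card Q) d'" using IHV IHT d'(1) by simp
    also have "\<dots> = FB (card (insert q Q)) d" using cardins d'(1) FB_Suc by simp
    finally show ?thesis by (simp add: W_def)
  qed
qed

subsection \<open>Inequalities\<close>

lemma pow2_le_binom: "t \<le> n \<Longrightarrow> 2^t \<le> ((n + t) choose t)"
proof (induction t)
  case 0 then show ?case by simp
next
  case (Suc t)
  have IH: "2^t \<le> (n + t) choose t" using Suc by simp
  have eq: "Suc (n + t) * ((n + t) choose t) = (Suc (n + t) choose Suc t) * Suc t"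
    by (rule Suc_times_binomial_eq)
  have "2 * Suc t * 2^t \<le> Suc (n + t) * 2^t" using Suc.prems by (intro mult_right_mono) simp_all
  also have "\<dots> \<le> Suc (n + t) * ((n + t) choose t)" using IH by (rule mult_le_mono2)
  also have "\<dots> = (Suc (n + t) choose Suc t) * Suc t" by (rule eq)
  finally have "Suc t * 2^Suc t \<le> Suc t * (Suc (n + t) choose Suc t)" by (simp add: algebra_simps)
  then have "2^Suc t \<le> (Suc (n + t) choose Suc t)" using mult_le_cancel1 by blast
  then show ?case by simp
qed

lemma ineq_comb:
  assumes "1 \<le> n" "n \<le> K" "K \<le> 2 * n"
  shows "(2::nat)^K \<le> n * 2^n * (K choose n)"
proof -
  define t where "t = K - n"
  have K: "K = n + t" "t \<le> n" using assms by (auto simp: t_def)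
  have "K choose n = K choose t" using K binomial_symmetric[of t K] by simp
  then have "2^t \<le> K choose n" using pow2_le_binom[OF K(2)] K(1) by simp
  then have "2^n * 2^t \<le> 2^n * (K choose n)" by simp
  also have "\<dots> \<le> n * (2^n * (K choose n))" using assms(1) by simp
  finally show ?thesis using K(1) by (simp add: power_add algebra_simps)
qed

lemma sum_pow2_le: "(\<Sum>i\<le>d. (2::nat)^i) \<le> 2^Suc d"
  by (induction d) auto

lemma FB_le:
  assumes "2 * d \<le> q"
  shows "FB q d \<le> (q choose d) * 2^Suc d"
proof -
  have "FB q d \<le> (\<Sum>i\<le>d. (q choose d) * 2^i)"
    unfolding FB_def using assms by (intro sum_mono mult_right_mono binomial_mono) auto
  also have "\<dots> = (q choose d) * (\<Sum>i\<le>d. 2^i)" by (simp add: sum_distrib_left)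
  also have "\<dots> \<le> (q choose d) * 2^Suc d" using sum_pow2_le by simp
  finally show ?thesis .
qed

lemma ineq_geo:
  assumes "1 \<le> n" "2 * n \<le> K"
  shows "K * FB (K - 1) (n - 1) \<le> n * 2^n * (K choose n)"
proof -
  obtain q d where qd: "K = Suc q" "n = Suc d" using assms
    by (metis Suc_le_D le_trans mult_2 le_add1 One_nat_def)
  have "2 * d \<le> q" using assms qd by simp
  then have "FB q d \<le> (q choose d) * 2^Suc d" by (rule FB_le)
  then have "K * FB (K - 1) (n - 1) \<le> Suc q * ((q choose d) * 2^Suc d)"
    using qd by (simp only: diff_Suc_1) (rule mult_le_mono2)
  also have "\<dots> = (Suc q * (q choose d)) * 2^Suc d" by (rule mult.assoc[symmetric])
  also have "Suc q * (q choose d) = (Suc q choose Suc d) * Suc d" by (rule Suc_times_binomial_eq)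
  finally show ?thesis using qd by (simp add: algebra_simps)
qed

subsection \<open>Tropical part\<close>

definition hpf :: "(nat \<Rightarrow> nat \<Rightarrow> 'n::finite \<Rightarrow> nat) \<Rightarrow> (nat \<Rightarrow> nat \<Rightarrow> real)
    \<Rightarrow> nat \<times> nat \<times> nat \<Rightarrow> real^'n \<Rightarrow> real" where
  "hpf a b p x = (case p of (i, j, j') \<Rightarrow> trop_mono a b i j x - trop_mono a b i j' x)"

definition Ps :: "nat \<Rightarrow> (nat \<Rightarrow> nat) \<Rightarrow> (nat \<times> nat \<times> nat) set" where
  "Ps k mc = {(i, j, j'). i < k \<and> j < j' \<and> j' < mc i}"

definition Bf :: "(nat \<Rightarrow> nat \<Rightarrow> 'n::finite \<Rightarrow> nat) \<Rightarrow> (nat \<Rightarrow> nat \<Rightarrow> real)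
    \<Rightarrow> (nat \<Rightarrow> nat) \<Rightarrow> nat \<Rightarrow> real^'n \<Rightarrow> (nat \<times> nat) set" where
  "Bf a b mc k x = {(i, j). i < k \<and> j < mc i \<and> trop_mono a b i j x = trop_poly a b mc i x}"

lemma trop_mono_inner:
  "trop_mono a b i j x = inner (\<chi> l. real (a i j l)) x + b i j"
  by (simp add: trop_mono_def inner_vec_def)

lemma hpf_aff: "\<exists>c e. \<forall>x. hpf a b p x = inner c x + e"
proof -
  obtain i j j' where p: "p = (i, j, j')" by (cases p) auto
  show ?thesis
    by (rule exI[where x="(\<chi> l. real (a i j l)) - (\<chi> l. real (a i j' l))"],
        rule exI[where x="b i j - b i j'"])
       (simp add: p hpf_def trop_mono_inner inner_diff_left)
qed

lemma poly_le: "j < mc i \<Longrightarrow> trop_poly a b mc i x \<le> trop_mono a b i j x"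
  unfolding trop_poly_def by (rule Min_le) auto

lemma poly_att: "0 < mc i \<Longrightarrow> \<exists>j<mc i. trop_mono a b i j x = trop_poly a b mc i x"
proof -
  assume "0 < mc i"
  then have "trop_poly a b mc i x \<in> (\<lambda>j. trop_mono a b i j x) ` {..<mc i}"
    unfolding trop_poly_def by (intro Min_in) auto
  then show ?thesis by auto
qed

lemma min_char:
  assumes "0 < mc i" "j < mc i"
  shows "trop_mono a b i j x = trop_poly a b mc i x \<longleftrightarrow>
         (\<forall>j'<mc i. trop_mono a b i j x \<le> trop_mono a b i j' x)"
proof
  assume "trop_mono a b i j x = trop_poly a b mc i x"
  then show "\<forall>j'<mc i. trop_mono a b i j x \<le> trop_mono a b i j' x" using poly_le by metis
next
  assume A: "\<forall>j'<mc i. trop_mono a b i j x \<le> trop_mono a b i j' x"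
  obtain j0 where "j0 < mc i" "trop_mono a b i j0 x = trop_poly a b mc i x" using poly_att assms(1) by blast
  then show "trop_mono a b i j x = trop_poly a b mc i x"
    using A poly_le[of j mc i a b x] assms(2) by (metis order_antisym)
qed

lemma faces_sub:
  "trop_faces a b mc k \<subseteq> (\<lambda>B. closure (trop_cell a b mc k B)) ` (Bf a b mc k ` trop_prevariety a b mc k)"
proof
  fix F assume "F \<in> trop_faces a b mc k"
  then obtain B where B: "F = closure (trop_cell a b mc k B)" "B \<subseteq> trop_index mc k"
    "trop_cell a b mc k B \<noteq> {}" "trop_cell a b mc k B \<subseteq> trop_prevariety a b mc k"
    unfolding trop_faces_def by blast
  then obtain x where x: "x \<in> trop_cell a b mc k B" by blast
  have "B = Bf a b mc k x"
  proof
    show "B \<subseteq> Bf a b mc k x"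
      using B(2) x unfolding Bf_def trop_index_def trop_cell_def by fast
    show "Bf a b mc k x \<subseteq> B"
    proof
      fix p assume p: "p \<in> Bf a b mc k x"
      obtain i j where ij: "p = (i, j)" by (cases p)
      show "p \<in> B"
      proof (rule ccontr)
        assume "p \<notin> B"
        then have "(i, j) \<in> trop_index mc k - B" using p ij unfolding Bf_def trop_index_def by auto
        then have "trop_poly a b mc i x < trop_mono a b i j x" using x unfolding trop_cell_def by fast
        then show False using p ij unfolding Bf_def by auto
      qed
    qed
  qed
  then show "F \<in> (\<lambda>B. closure (trop_cell a b mc k B)) ` (Bf a b mc k ` trop_prevariety a b mc k)"
    using B(1,4) x by blast
qed

lemma finite_Bf: "finite (Bf a b mc k ` S)"
proof -
  have "Bf a b mc k ` S \<subseteq> Pow (trop_index mc k)"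
    unfolding Bf_def trop_index_def by auto
  moreover have "finite (trop_index mc k)"
  proof -
    have M: "j < Max (mc ` {..<k})" if "i < k" "j < mc i" for i j
    proof -
      have "mc i \<le> Max (mc ` {..<k})" using that(1) by (intro Max_ge) auto
      then show ?thesis using that(2) by linarith
    qed
    have "trop_index mc k \<subseteq> {..<k} \<times> {..<Max (mc ` {..<k})}"
      unfolding trop_index_def using M by auto
    then show ?thesis by (rule finite_subset) auto
  qed
  ultimately show ?thesis by (meson finite_Pow_iff finite_subset)
qed

lemma card_PP: "card {(j, j'). j < j' \<and> j' < (N::nat)} = N choose 2"
proof (induction N)
  case 0 then show ?case by simp
next
  case (Suc N)
  have eq: "{(j, j'). j < j' \<and> j' < Suc N} = {(j, j'). j < j' \<and> j' < N} \<union> (\<lambda>j. (j, N)) ` {..<N}"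
    by auto
  have fin: "finite {(j, j'). j < j' \<and> j' < N}"
    by (rule finite_subset[of _ "{..<N} \<times> {..<N}"]) auto
  have "card ({(j, j'). j < j' \<and> j' < N} \<union> (\<lambda>j. (j, N)) ` {..<N})
      = card {(j, j'). j < j' \<and> j' < N} + card ((\<lambda>j. (j, N)) ` {..<N})"
    using fin by (intro card_Un_disjoint) auto
  also have "card ((\<lambda>j. (j, N)) ` {..<N}) = N" by (simp add: card_image inj_on_def)
  also have "(Suc N choose 2) = (N choose 2) + N"
    by (simp add: numeral_2_eq_2)
  ultimately show ?case using eq Suc.IH by simp
qed

lemma finite_Ps: "finite (Ps k mc)"
proof -
  have M: "j < Max (mc ` {..<k})" if "i < k" "j < mc i" for i j
  proof -
    have "mc i \<le> Max (mc ` {..<k})" using that(1) by (intro Max_ge) auto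
    then show ?thesis using that(2) by linarith
  qed
  have "Ps k mc \<subseteq> {..<k} \<times> {..<Max (mc ` {..<k})} \<times> {..<Max (mc ` {..<k})}"
    unfolding Ps_def using M by fastforce
  then show ?thesis by (rule finite_subset) auto
qed

lemma card_Ps:
  assumes "\<And>i. i < k \<Longrightarrow> mc i \<le> m"
  shows "card (Ps k mc) \<le> k * (m choose 2)"
proof -
  have eq: "Ps k mc = (\<Union>i\<in>{..<k}. (\<lambda>(j, j'). (i, j, j')) ` {(j, j'). j < j' \<and> j' < mc i})"
    unfolding Ps_def by auto
  have "card (Ps k mc) \<le> (\<Sum>i\<in>{..<k}. card ((\<lambda>(j, j'). (i, j, j')) ` {(j, j'). j < j' \<and> j' < mc i}))"
    unfolding eq by (rule card_UN_le) simp
  also have "\<dots> \<le> (\<Sum>i\<in>{..<k}. m choose 2)"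
  proof (rule sum_mono)
    fix i assume "i \<in> {..<k}"
    have "card ((\<lambda>(j, j'). (i, j, j')) ` {(j, j'). j < j' \<and> j' < mc i}) \<le> card {(j, j'). j < j' \<and> j' < mc i}"
      by (rule card_image_le) (rule finite_subset[of _ "{..<mc i} \<times> {..<mc i}"], auto)
    also have "\<dots> = mc i choose 2" by (rule card_PP)
    also have "\<dots> \<le> m choose 2" using assms \<open>i \<in> {..<k}\<close> by (intro binomial_right_mono) auto
    finally show "card ((\<lambda>(j, j'). (i, j, j')) ` {(j, j'). j < j' \<and> j' < mc i}) \<le> m choose 2" .
  qed
  also have "\<dots> = k * (m choose 2)" by simp
  finally show ?thesis .
qed

lemma prev_ties:
  assumes "x \<in> trop_prevariety a b mc k" "i < k"
  shows "\<exists>j0<mc i. \<exists>j1<mc i. j0 \<noteq> j1 \<and> trop_mono a b i j0 x = trop_poly a b mc i x \<and>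
           trop_mono a b i j1 x = trop_poly a b mc i x"
  using assms unfolding trop_prevariety_def trop_hypersurface_def by blast

lemma comb_bound:
  "card (Bf a b mc k ` trop_prevariety a b mc k) \<le> 2 ^ card (Ps k mc)"
proof -
  define V where "V = trop_prevariety a b mc k"
  define G where "G = (\<lambda>B. {(i, j, j') \<in> Ps k mc. (i, j) \<in> B \<and> (i, j') \<in> B})"
  define R where "R = (\<lambda>S::(nat\<times>nat\<times>nat) set. {(i, j). \<exists>j'. (i, j, j') \<in> S \<or> (i, j', j) \<in> S})"
  have RG: "R (G (Bf a b mc k x)) = Bf a b mc k x" if x: "x \<in> V" for x
  proof
    show "R (G (Bf a b mc k x)) \<subseteq> Bf a b mc k x" unfolding R_def G_def by auto
    show "Bf a b mc k x \<subseteq> R (G (Bf a b mc k x))"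
    proof clarify
      fix i j assume ij: "(i, j) \<in> Bf a b mc k x"
      then have i: "i < k" "j < mc i" unfolding Bf_def by auto
      obtain j0 j1 where t: "j0 < mc i" "j1 < mc i" "j0 \<noteq> j1" "trop_mono a b i j0 x = trop_poly a b mc i x"
        "trop_mono a b i j1 x = trop_poly a b mc i x" using prev_ties[OF x[unfolded V_def] i(1)] by blast
      obtain j' where j': "j' < mc i" "j' \<noteq> j" "(i, j') \<in> Bf a b mc k x"
        using t i unfolding Bf_def by (cases "j0 = j") auto
      show "(i, j) \<in> R (G (Bf a b mc k x))"
      proof (cases "j < j'")
        case True
        then have "(i, j, j') \<in> G (Bf a b mc k x)" using ij j' i unfolding G_def Ps_def by auto
        then show ?thesis unfolding R_def by auto
      next
        case False
        then have "(i, j', j) \<in> G (Bf a b mc k x)" using ij j' i unfolding G_def Ps_def by auto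
        then show ?thesis unfolding R_def by auto
      qed
    qed
  qed
  have "inj_on G (Bf a b mc k ` V)"
    by (rule inj_onI) (metis RG imageE)
  then have "card (Bf a b mc k ` V) = card (G ` (Bf a b mc k ` V))" by (simp add: card_image)
  also have "\<dots> \<le> card (Pow (Ps k mc))"
    using finite_Ps by (intro card_mono) (auto simp: G_def)
  also have "\<dots> = 2 ^ card (Ps k mc)" using finite_Ps by (rule card_Pow)
  finally show ?thesis unfolding V_def .
qed

lemma sign_det:
  assumes mc: "\<And>i. i < k \<Longrightarrow> 0 < mc i"
    and eq: "sgnvec (hpf a b) (Ps k mc) x = sgnvec (hpf a b) (Ps k mc) y"
  shows "Bf a b mc k x = Bf a b mc k y"
proof -
  have le: "trop_mono a b i j x \<le> trop_mono a b i j' x \<longleftrightarrow> trop_mono a b i j y \<le> trop_mono a b i j' y"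
    if "i < k" "j < mc i" "j' < mc i" for i j j'
  proof -
    have sg: "sgn (hpf a b p x) = sgn (hpf a b p y)" if "p \<in> Ps k mc" for p
      using eq that unfolding sgnvec_def restrict_def by (metis (mono_tags, lifting))
    consider "j < j'" | "j = j'" | "j' < j" by linarith
    then show ?thesis
    proof cases
      case 1
      then have "(i, j, j') \<in> Ps k mc" using that unfolding Ps_def by auto
      then have "sgn (trop_mono a b i j x - trop_mono a b i j' x) = sgn (trop_mono a b i j y - trop_mono a b i j' y)"
        using sg unfolding hpf_def by fastforce
      then show ?thesis by (auto simp: sgn_real_def split: if_splits)
    next
      case 2 then show ?thesis by simp
    next
      case 3
      then have "(i, j', j) \<in> Ps k mc" using that unfolding Ps_def by auto
      then have "sgn (trop_mono a b i j' x - trop_mono a b i j x) = sgn (trop_mono a b i j' y - trop_mono a b i j y)"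
        using sg unfolding hpf_def by fastforce
      then show ?thesis by (auto simp: sgn_real_def split: if_splits)
    qed
  qed
  show ?thesis
  proof (rule set_eqI, clarify)
    fix i j
    show "(i, j) \<in> Bf a b mc k x \<longleftrightarrow> (i, j) \<in> Bf a b mc k y"
    proof (cases "i < k \<and> j < mc i")
      case True
      then show ?thesis unfolding Bf_def using min_char[of mc i j a b x] min_char[of mc i j a b y] mc le
        by auto
    qed (auto simp: Bf_def)
  qed
qed

lemma hp_not_univ:
  fixes a :: "nat \<Rightarrow> nat \<Rightarrow> 'n::finite \<Rightarrow> nat"
  assumes "(a i j, b i j) \<noteq> (a i j', b i j')"
  shows "{x. hpf a b (i, j, j') x = 0} \<noteq> UNIV"
proof
  assume A: "{x. hpf a b (i, j, j') x = 0} = UNIV"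
  then have z: "hpf a b (i, j, j') 0 = 0" by blast
  then have bb: "b i j = b i j'" by (simp add: hpf_def trop_mono_def)
  have "a i j l = a i j' l" for l
  proof -
    have "hpf a b (i, j, j') (axis l 1) = 0" using A by blast
    then show ?thesis using bb by (simp add: hpf_def trop_mono_def axis_def if_distrib sum.delta cong: if_cong)
  qed
  then have "a i j = a i j'" by blast
  then show False using assms bb by simp
qed

lemma geo_bound:
  fixes a :: "nat \<Rightarrow> nat \<Rightarrow> 'n::finite \<Rightarrow> nat"
  assumes mc: "\<And>i. i < k \<Longrightarrow> 0 < mc i" and k: "0 < k"
    and distinct_monos: "\<And>i j j'. i < k \<Longrightarrow> j < mc i \<Longrightarrow> j' < mc i \<Longrightarrow> j \<noteq> j' \<Longrightarrow>
          (a i j, b i j) \<noteq> (a i j', b i j')"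
  shows "card (Bf a b mc k ` trop_prevariety a b mc k) \<le> card (Ps k mc) * FB (card (Ps k mc) - 1) (CARD('n) - 1)"
proof -
  define V where "V = trop_prevariety a b mc k"
  define P where "P = Ps k mc"
  define \<sigma> where "\<sigma> = sgnvec (hpf a b) P"
  define H where "H = (\<lambda>p. {x. hpf a b p x = 0})"
  have finP: "finite P" unfolding P_def by (rule finite_Ps)
  define f where "f = (\<lambda>s. Bf a b mc k (SOME x. x \<in> V \<and> \<sigma> x = s))"
  have fx: "Bf a b mc k x = f (\<sigma> x)" if "x \<in> V" for x
  proof -
    have some: "(SOME y. y \<in> V \<and> \<sigma> y = \<sigma> x) \<in> V \<and> \<sigma> (SOME y. y \<in> V \<and> \<sigma> y = \<sigma> x) = \<sigma> x"
      by (rule someI[where x=x]) (simp add: that)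
    then have "sgnvec (hpf a b) (Ps k mc) x = sgnvec (hpf a b) (Ps k mc) (SOME y. y \<in> V \<and> \<sigma> y = \<sigma> x)"
      unfolding \<sigma>_def P_def by simp
    then have "Bf a b mc k x = Bf a b mc k (SOME y. y \<in> V \<and> \<sigma> y = \<sigma> x)"
      using sign_det[of k mc a b x "SOME y. y \<in> V \<and> \<sigma> y = \<sigma> x"] mc by blast
    then show ?thesis unfolding f_def .
  qed
  have "Bf a b mc k ` V = (\<lambda>x. f (\<sigma> x)) ` V" by (rule image_cong[OF refl]) (rule fx)
  also have "\<dots> = f ` (\<sigma> ` V)" by (rule image_image[symmetric])
  finally have imgeq: "Bf a b mc k ` V = f ` (\<sigma> ` V)" .
  have fin\<sigma>: "finite (\<sigma> ` V)" unfolding \<sigma>_def using finP by (rule sgnvec_finite)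
  have "card (Bf a b mc k ` V) \<le> card (\<sigma> ` V)" unfolding imgeq using fin\<sigma> by (rule card_image_le)
  also have "\<dots> \<le> card (\<Union>p\<in>P. \<sigma> ` H p)"
  proof (rule card_mono)
    show "finite (\<Union>p\<in>P. \<sigma> ` H p)" using finP sgnvec_finite unfolding \<sigma>_def by blast
    show "\<sigma> ` V \<subseteq> (\<Union>p\<in>P. \<sigma> ` H p)"
    proof clarify
      fix x assume x: "x \<in> V"
      obtain j0 j1 where t: "j0 < mc 0" "j1 < mc 0" "j0 \<noteq> j1" "trop_mono a b 0 j0 x = trop_poly a b mc 0 x"
        "trop_mono a b 0 j1 x = trop_poly a b mc 0 x" using prev_ties[OF x[unfolded V_def] k] by blast
      define p where "p = (0::nat, min j0 j1, max j0 j1)"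
      have "p \<in> P" using t k unfolding p_def P_def Ps_def by (auto simp: min_def max_def)
      moreover have "x \<in> H p" using t unfolding H_def p_def hpf_def by (auto simp: min_def max_def)
      ultimately show "\<sigma> x \<in> (\<Union>p\<in>P. \<sigma> ` H p)" by blast
    qed
  qed
  also have "\<dots> \<le> (\<Sum>p\<in>P. card (\<sigma> ` H p))" using finP by (rule card_UN_le)
  also have "\<dots> \<le> (\<Sum>p\<in>P. FB (card P - 1) (CARD('n) - 1))"
  proof (rule sum_mono)
    fix p assume pP: "p \<in> P"
    obtain i j j' where p: "p = (i, j, j')" by (cases p)
    have ijj: "i < k" "j < j'" "j' < mc i" using pP unfolding p P_def Ps_def by auto
    have "\<sigma> x = (sgnvec (hpf a b) (P - {p}) x)(p := 0)" if "x \<in> H p" for x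
      using that pP unfolding \<sigma>_def H_def sgnvec_def by (intro ext) (auto simp: restrict_def)
    then have "\<sigma> ` H p \<subseteq> (\<lambda>w. w(p := 0)) ` (sgnvec (hpf a b) (P - {p}) ` H p)" by auto
    then have "card (\<sigma> ` H p) \<le> card ((\<lambda>w. w(p := 0)) ` (sgnvec (hpf a b) (P - {p}) ` H p))"
      using finP sgnvec_finite by (intro card_mono) blast+
    also have "\<dots> \<le> card (sgnvec (hpf a b) (P - {p}) ` H p)" by (rule card_image_le) (use finP sgnvec_finite in blast)
    also have "\<dots> \<le> FB (card (P - {p})) (CARD('n) - 1)"
    proof (rule sign_count[OF hpf_aff])
      show "finite (P - {p})" using finP by simp
      obtain c e where ce: "\<forall>x. hpf a b p x = inner c x + e" using hpf_aff by blast
      have Heq: "H p = {x. c \<bullet> x = - e}" unfolding H_def using ce by (auto simp: algebra_simps)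
      show affH: "affine (H p)" unfolding Heq by (rule affine_hyperplane)
      have jm: "j < mc i" using ijj by linarith
      have jn: "j \<noteq> j'" using ijj by simp
      have "H p \<noteq> UNIV" unfolding H_def p by (rule hp_not_univ) (rule distinct_monos[OF ijj(1) jm ijj(3) jn])
      then have "affine hull (H p) \<subset> affine hull (UNIV :: (real^'n) set)"
        using affH by (simp add: hull_same affine_UNIV psubset_eq)
      then have "aff_dim (H p) < aff_dim (UNIV :: (real^'n) set)" by (rule aff_dim_psubset)
      then show "aff_dim (H p) \<le> int (CARD('n) - 1)" by simp
    qed
    also have "card (P - {p}) = card P - 1" using pP finP by simp
    finally show "card (\<sigma> ` H p) \<le> FB (card P - 1) (CARD('n) - 1)" .
  qed
  also have "\<dots> = card P * FB (card P - 1) (CARD('n) - 1)" by simp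
  finally show ?thesis unfolding V_def P_def .
qed

theorem theorem3p4:
  fixes a :: "nat \<Rightarrow> nat \<Rightarrow> 'n::finite \<Rightarrow> nat" and b :: "nat \<Rightarrow> nat \<Rightarrow> real"
    and mc :: "nat \<Rightarrow> nat" and k m :: nat
  assumes mono_count: "\<And>i. i < k \<Longrightarrow> 1 \<le> mc i \<and> mc i \<le> m"
    and distinct_monos: "\<And>i j j'. i < k \<Longrightarrow> j < mc i \<Longrightarrow> j' < mc i \<Longrightarrow> j \<noteq> j' \<Longrightarrow>
          (a i j, b i j) \<noteq> (a i j', b i j')"
    and dim: "CARD('n) \<le> k * (m choose 2)"
  shows "finite (trop_faces a b mc k) \<and>
    card (trop_faces a b mc k) \<le> CARD('n) * 2 ^ CARD('n) * ((k * (m choose 2)) choose CARD('n))"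
proof -
  define n where "n = CARD('n)"
  define K where "K = k * (m choose 2)"
  define V where "V = trop_prevariety a b mc k"
  have n1: "1 \<le> n" unfolding n_def by (simp add: Suc_leI)
  have nK: "n \<le> K" using dim unfolding n_def K_def .
  have k0: "0 < k" using n1 nK unfolding K_def by (cases k) auto
  have mc: "\<And>i. i < k \<Longrightarrow> 0 < mc i" using mono_count by fastforce
  have mcm: "\<And>i. i < k \<Longrightarrow> mc i \<le> m" using mono_count by blast
  have sub: "trop_faces a b mc k \<subseteq> (\<lambda>B. closure (trop_cell a b mc k B)) ` (Bf a b mc k ` V)"
    unfolding V_def by (rule faces_sub)
  have finB: "finite (Bf a b mc k ` V)" by (rule finite_Bf)
  have fin: "finite (trop_faces a b mc k)" using sub finB by (meson finite_imageI finite_subset)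
  have "card (trop_faces a b mc k) \<le> card ((\<lambda>B. closure (trop_cell a b mc k B)) ` (Bf a b mc k ` V))"
    using sub finB by (intro card_mono) auto
  also have "\<dots> \<le> card (Bf a b mc k ` V)" using finB by (rule card_image_le)
  finally have c0: "card (trop_faces a b mc k) \<le> card (Bf a b mc k ` V)" .
  have cP: "card (Ps k mc) \<le> K" unfolding K_def using mcm by (rule card_Ps)
  have "card (Bf a b mc k ` V) \<le> n * 2 ^ n * (K choose n)"
  proof (cases "K \<le> 2 * n")
    case True
    have "card (Bf a b mc k ` V) \<le> 2 ^ card (Ps k mc)" unfolding V_def by (rule comb_bound)
    also have "\<dots> \<le> 2 ^ K" using cP by (intro power_increasing) auto
    also have "\<dots> \<le> n * 2 ^ n * (K choose n)" using n1 nK True by (rule ineq_comb)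
    finally show ?thesis .
  next
    case False
    have "card (Bf a b mc k ` V) \<le> card (Ps k mc) * FB (card (Ps k mc) - 1) (n - 1)"
      unfolding V_def n_def by (rule geo_bound[OF mc k0 distinct_monos])
    also have "\<dots> \<le> K * FB (K - 1) (n - 1)"
      using cP by (intro mult_le_mono FB_mono) auto
    also have "\<dots> \<le> n * 2 ^ n * (K choose n)" using n1 False by (intro ineq_geo) auto
    finally show ?thesis .
  qed
  with c0 fin show ?thesis unfolding n_def K_def by simp
qed

end
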